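(* For all $n\ge 1$, $|F_n(321,1423,4123)|=F_{n+1}-1$, where $F_n$ is the $n$-th Fibonacci number with $F_0=F_1=1$ and $F_n=F_{n-1}+F_{n-2}$ for $n\ge 2$.
   Context: A permutation $\pi$ avoids a classical pattern $p\in S_k$ if no subsequence of $\pi$ of length $k$ is order-isomorphic to $p$. A Fishburn permutation is a permutation $\pi=\pi_1\cdots\pi_n$ of $[n]$ for which there are no indices $i<j$ with $\pi_j<\pi_i<\pi_{i+1}$ and $\pi_i=\pi_j+1$. $F_n(\sigma_1,\dots,\sigma_k)$ denotes the set of Fishburn permutations of length $n$ avoiding each of the classical patterns $\sigma_1,\dots,\sigma_k$. *)

theory Defs
  imports Main
begin

(* Permutations of [n] are represented as lists: pi = [pi_1, ..., pi_n] (0-indexed in Isabelle). *)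
definition is_perm :: "nat \<Rightarrow> nat list \<Rightarrow> bool" where
  "is_perm n xs \<longleftrightarrow> length xs = n \<and> distinct xs \<and> set xs = {1..n}"

definition contains :: "nat list \<Rightarrow> nat list \<Rightarrow> bool" where
  "contains xs p \<longleftrightarrow> (\<exists>idx :: nat list.
      length idx = length p \<and> sorted_wrt (<) idx \<and> (\<forall>i\<in>set idx. i < length xs) \<and>
      (\<forall>a < length p. \<forall>b < length p.
          (xs ! (idx ! a) < xs ! (idx ! b)) \<longleftrightarrow> (p ! a < p ! b)))"

definition avoids :: "nat list \<Rightarrow> nat list \<Rightarrow> bool" where
  "avoids xs p \<longleftrightarrow> \<not> contains xs p"

definition fishburn :: "nat list \<Rightarrow> bool" where
  "fishburn xs \<longleftrightarrow> \<not> (\<exists>i j. i < j \<and> j < length xs \<and> i + 1 < length xs \<and>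
      xs ! j < xs ! i \<and> xs ! i < xs ! (i + 1) \<and> xs ! i = xs ! j + 1)"

definition fishburn_avoiders :: "nat \<Rightarrow> nat list list \<Rightarrow> nat list set" where
  "fishburn_avoiders n ps = {xs. is_perm n xs \<and> fishburn xs \<and> (\<forall>p\<in>set ps. avoids xs p)}"

fun fib1 :: "nat \<Rightarrow> nat" where
  "fib1 0 = 1"
| "fib1 (Suc 0) = 1"
| "fib1 (Suc (Suc n)) = fib1 (Suc n) + fib1 n"

end

theory Submission
  imports Defs
begin


lemma c321: "contains xs [3,2,1] \<longleftrightarrow> (\<exists>i j k. i<j \<and> j<k \<and> k<length xs \<and> xs!j < xs!i \<and> xs!k < xs!j)"
proof
  assume "contains xs [3,2,1]"
  then obtain idx where L: "length idx = length [3,2,1::nat]" and S: "sorted_wrt (<) idx" and B: "\<forall>i\<in>set idx. i < length xs"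
    and V: "\<forall>a < length [3,2,1::nat]. \<forall>b < length [3,2,1::nat]. (xs ! (idx ! a) < xs ! (idx ! b)) \<longleftrightarrow> ([3,2,1::nat] ! a < [3,2,1::nat] ! b)"
    unfolding contains_def by blast
  from L obtain i j k where I: "idx = [i,j,k]" by (auto simp: length_Suc_conv)
  have "xs!j < xs!i" using V[rule_format, of 1 0] I by simp
  moreover have "xs!k < xs!j" using V[rule_format, of 2 1] I by simp
  ultimately show "\<exists>i j k. i<j \<and> j<k \<and> k<length xs \<and> xs!j < xs!i \<and> xs!k < xs!j"
    using S B I by auto
next
  assume "\<exists>i j k. i<j \<and> j<k \<and> k<length xs \<and> xs!j < xs!i \<and> xs!k < xs!j"
  then obtain i j k where H: "i<j" "j<k" "k<length xs" "xs!j < xs!i" "xs!k < xs!j" by blast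
  show "contains xs [3,2,1]" unfolding contains_def
    apply (rule exI[of _ "[i,j,k]"])
    using H by (auto simp: less_Suc_eq numeral_3_eq_3)
qed

lemma c1423: "contains xs [1,4,2,3] \<longleftrightarrow> (\<exists>i j k l. i<j \<and> j<k \<and> k<l \<and> l<length xs \<and> xs!i < xs!k \<and> xs!k < xs!l \<and> xs!l < xs!j)"
proof
  assume "contains xs [1,4,2,3]"
  then obtain idx where L: "length idx = length [1,4,2,3::nat]" and S: "sorted_wrt (<) idx" and B: "\<forall>i\<in>set idx. i < length xs"
    and V: "\<forall>a < length [1,4,2,3::nat]. \<forall>b < length [1,4,2,3::nat]. (xs ! (idx ! a) < xs ! (idx ! b)) \<longleftrightarrow> ([1,4,2,3::nat] ! a < [1,4,2,3::nat] ! b)"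
    unfolding contains_def by blast
  from L obtain i j k l where I: "idx = [i,j,k,l]" by (auto simp: length_Suc_conv)
  have "xs!i < xs!k" using V[rule_format, of 0 2] I by simp
  moreover have "xs!k < xs!l" using V[rule_format, of 2 3] I by simp
  moreover have "xs!l < xs!j" using V[rule_format, of 3 1] I by simp
  ultimately show "\<exists>i j k l. i<j \<and> j<k \<and> k<l \<and> l<length xs \<and> xs!i < xs!k \<and> xs!k < xs!l \<and> xs!l < xs!j"
    using S B I by auto
next
  assume "\<exists>i j k l. i<j \<and> j<k \<and> k<l \<and> l<length xs \<and> xs!i < xs!k \<and> xs!k < xs!l \<and> xs!l < xs!j"
  then obtain i j k l where H: "i<j" "j<k" "k<l" "l<length xs" "xs!i < xs!k" "xs!k < xs!l" "xs!l < xs!j" by blast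
  show "contains xs [1,4,2,3]" unfolding contains_def
    apply (rule exI[of _ "[i,j,k,l]"])
    using H by (auto simp: less_Suc_eq numeral_eq_Suc)
qed

lemma c4123: "contains xs [4,1,2,3] \<longleftrightarrow> (\<exists>i j k l. i<j \<and> j<k \<and> k<l \<and> l<length xs \<and> xs!j < xs!k \<and> xs!k < xs!l \<and> xs!l < xs!i)"
proof
  assume "contains xs [4,1,2,3]"
  then obtain idx where L: "length idx = length [4,1,2,3::nat]" and S: "sorted_wrt (<) idx" and B: "\<forall>i\<in>set idx. i < length xs"
    and V: "\<forall>a < length [4,1,2,3::nat]. \<forall>b < length [4,1,2,3::nat]. (xs ! (idx ! a) < xs ! (idx ! b)) \<longleftrightarrow> ([4,1,2,3::nat] ! a < [4,1,2,3::nat] ! b)"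
    unfolding contains_def by blast
  from L obtain i j k l where I: "idx = [i,j,k,l]" by (auto simp: length_Suc_conv)
  have "xs!j < xs!k" using V[rule_format, of 1 2] I by simp
  moreover have "xs!k < xs!l" using V[rule_format, of 2 3] I by simp
  moreover have "xs!l < xs!i" using V[rule_format, of 3 0] I by simp
  ultimately show "\<exists>i j k l. i<j \<and> j<k \<and> k<l \<and> l<length xs \<and> xs!j < xs!k \<and> xs!k < xs!l \<and> xs!l < xs!i"
    using S B I by auto
next
  assume "\<exists>i j k l. i<j \<and> j<k \<and> k<l \<and> l<length xs \<and> xs!j < xs!k \<and> xs!k < xs!l \<and> xs!l < xs!i"
  then obtain i j k l where H: "i<j" "j<k" "k<l" "l<length xs" "xs!j < xs!k" "xs!k < xs!l" "xs!l < xs!i" by blast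
  show "contains xs [4,1,2,3]" unfolding contains_def
    apply (rule exI[of _ "[i,j,k,l]"])
    using H by (auto simp: less_Suc_eq numeral_eq_Suc)
qed




abbreviation "PP \<equiv> [[3,2,1], [1,4,2,3], [4,1,2,3::nat]]"

definition N321 :: "nat list \<Rightarrow> bool" where "N321 xs \<longleftrightarrow> \<not>(\<exists>i j k. i<j \<and> j<k \<and> k<length xs \<and> xs!j < xs!i \<and> xs!k < xs!j)"
definition N1423 :: "nat list \<Rightarrow> bool" where "N1423 xs \<longleftrightarrow> \<not>(\<exists>i j k l. i<j \<and> j<k \<and> k<l \<and> l<length xs \<and> xs!i < xs!k \<and> xs!k < xs!l \<and> xs!l < xs!j)"
definition N4123 :: "nat list \<Rightarrow> bool" where "N4123 xs \<longleftrightarrow> \<not>(\<exists>i j k l. i<j \<and> j<k \<and> k<l \<and> l<length xs \<and> xs!j < xs!k \<and> xs!k < xs!l \<and> xs!l < xs!i)"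

lemma memF: "xs \<in> fishburn_avoiders n PP \<longleftrightarrow> is_perm n xs \<and> fishburn xs \<and> N321 xs \<and> N1423 xs \<and> N4123 xs"
proof -
  have e: "(\<forall>p\<in>set PP. avoids xs p) = (avoids xs [3,2,1] \<and> avoids xs [1,4,2,3] \<and> avoids xs [4,1,2,3])"
    by (simp only: set_simps ball_simps simp_thms)
  show ?thesis
  unfolding fishburn_avoiders_def mem_Collect_eq e avoids_def c321 c1423 c4123 N321_def N1423_def N4123_def 
  by (rule refl)
qed



lemma perm_bound: "is_perm n xs \<Longrightarrow> i < length xs \<Longrightarrow> 1 \<le> xs!i \<and> xs!i \<le> n"
  unfolding is_perm_def by (metis atLeastAtMost_iff nth_mem)

lemma N321I: "(\<And>i j k. i<j \<Longrightarrow> j<k \<Longrightarrow> k<length xs \<Longrightarrow> xs!j < xs!i \<Longrightarrow> xs!k < xs!j \<Longrightarrow> False) \<Longrightarrow> N321 xs"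
  unfolding N321_def by blast
lemma N321D: "N321 xs \<Longrightarrow> i<j \<Longrightarrow> j<k \<Longrightarrow> k<length xs \<Longrightarrow> xs!j < xs!i \<Longrightarrow> xs!k < xs!j \<Longrightarrow> False"
  unfolding N321_def by blast
lemma N1423I: "(\<And>i j k l. i<j \<Longrightarrow> j<k \<Longrightarrow> k<l \<Longrightarrow> l<length xs \<Longrightarrow> xs!i < xs!k \<Longrightarrow> xs!k < xs!l \<Longrightarrow> xs!l < xs!j \<Longrightarrow> False) \<Longrightarrow> N1423 xs"
  unfolding N1423_def by blast
lemma N1423D: "N1423 xs \<Longrightarrow> i<j \<Longrightarrow> j<k \<Longrightarrow> k<l \<Longrightarrow> l<length xs \<Longrightarrow> xs!i < xs!k \<Longrightarrow> xs!k < xs!l \<Longrightarrow> xs!l < xs!j \<Longrightarrow> False"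
  unfolding N1423_def by blast
lemma N4123I: "(\<And>i j k l. i<j \<Longrightarrow> j<k \<Longrightarrow> k<l \<Longrightarrow> l<length xs \<Longrightarrow> xs!j < xs!k \<Longrightarrow> xs!k < xs!l \<Longrightarrow> xs!l < xs!i \<Longrightarrow> False) \<Longrightarrow> N4123 xs"
  unfolding N4123_def by blast
lemma N4123D: "N4123 xs \<Longrightarrow> i<j \<Longrightarrow> j<k \<Longrightarrow> k<l \<Longrightarrow> l<length xs \<Longrightarrow> xs!j < xs!k \<Longrightarrow> xs!k < xs!l \<Longrightarrow> xs!l < xs!i \<Longrightarrow> False"
  unfolding N4123_def by blast
lemma FBI: "(\<And>i j. i<j \<Longrightarrow> j<length xs \<Longrightarrow> i+1 < length xs \<Longrightarrow> xs!j < xs!i \<Longrightarrow> xs!i < xs!(i+1) \<Longrightarrow> xs!i = xs!j + 1 \<Longrightarrow> False) \<Longrightarrow> fishburn xs"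
  unfolding fishburn_def by blast
lemma FBD: "fishburn xs \<Longrightarrow> i<j \<Longrightarrow> j<length xs \<Longrightarrow> i+1 < length xs \<Longrightarrow> xs!j < xs!i \<Longrightarrow> xs!i < xs!(i+1) \<Longrightarrow> xs!i = xs!j + 1 \<Longrightarrow> False"
  unfolding fishburn_def by blast

lemma pre321: "N321 (xs@zs) \<Longrightarrow> N321 xs"
  apply (rule N321I) subgoal for i j k using N321D[of "xs@zs" i j k] by (simp add: nth_append) done
lemma pre1423: "N1423 (xs@zs) \<Longrightarrow> N1423 xs"
  apply (rule N1423I) subgoal for i j k l using N1423D[of "xs@zs" i j k l] by (simp add: nth_append) done
lemma pre4123: "N4123 (xs@zs) \<Longrightarrow> N4123 xs"
  apply (rule N4123I) subgoal for i j k l using N4123D[of "xs@zs" i j k l] by (simp add: nth_append) done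
lemma prefb: "fishburn (xs@zs) \<Longrightarrow> fishburn xs"
  apply (rule FBI) subgoal for i j using FBD[of "xs@zs" i j] by (simp add: nth_append) done

lemma ap321: assumes "N321 xs" "\<forall>x\<in>set xs. x < v" shows "N321 (xs@[v])"
proof (rule N321I)
  fix i j k assume H: "i<j" "j<k" "k<length (xs@[v])" "(xs@[v])!j < (xs@[v])!i" "(xs@[v])!k < (xs@[v])!j"
  show False
  proof (cases "k < length xs")
    case True then show ?thesis using H N321D[OF assms(1), of i j k] by (simp add: nth_append)
  next
    case False
    then have k: "k = length xs" using H by simp
    then have "xs!j < v" using H assms(2) by simp
    then show ?thesis using H k by (simp add: nth_append)
  qed
qed
lemma ap1423: assumes "N1423 xs" "\<forall>x\<in>set xs. x < v" shows "N1423 (xs@[v])"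
proof (rule N1423I)
  fix i j k l assume H: "i<j" "j<k" "k<l" "l<length (xs@[v])" "(xs@[v])!i < (xs@[v])!k" "(xs@[v])!k < (xs@[v])!l" "(xs@[v])!l < (xs@[v])!j"
  show False
  proof (cases "l < length xs")
    case True then show ?thesis using H N1423D[OF assms(1), of i j k l] by (simp add: nth_append)
  next
    case False
    then have k: "l = length xs" using H by simp
    then have "xs!j < v" using H assms(2) by simp
    then show ?thesis using H k by (simp add: nth_append)
  qed
qed

lemma ap4123: assumes "N4123 xs" "\<forall>x\<in>set xs. x < v" shows "N4123 (xs@[v])"
proof (rule N4123I)
  fix i j k l assume H: "i<j" "j<k" "k<l" "l<length (xs@[v])" "(xs@[v])!j < (xs@[v])!k" "(xs@[v])!k < (xs@[v])!l" "(xs@[v])!l < (xs@[v])!i"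
  show False
  proof (cases "l < length xs")
    case True then show ?thesis using H N4123D[OF assms(1), of i j k l] by (simp add: nth_append)
  next
    case False
    then have k: "l = length xs" using H by simp
    then have "xs!i < v" using H assms(2) by simp
    then show ?thesis using H k by (simp add: nth_append)
  qed
qed

lemma apfb: assumes "fishburn xs" "\<forall>x\<in>set xs. x < v" shows "fishburn (xs@[v])"
proof (rule FBI)
  fix i j assume H: "i<j" "j<length (xs@[v])" "i+1 < length (xs@[v])" "(xs@[v])!j < (xs@[v])!i" "(xs@[v])!i < (xs@[v])!(i+1)" "(xs@[v])!i = (xs@[v])!j + 1"
  show False
  proof (cases "j < length xs")
    case True then show ?thesis using H FBD[OF assms(1), of i j] by (simp add: nth_append)
  next
    case False
    then have k: "j = length xs" using H by simp
    then have "xs!i < v" using H assms(2) by simp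
    then show ?thesis using H k by (simp add: nth_append)
  qed
qed

lemma nth2: "p < length xs + 2 \<Longrightarrow> (xs@[a,b])!p = (if p < length xs then xs!p else if p = length xs then a else b)"
  by (auto simp: nth_append less_Suc_eq numeral_2_eq_2)

lemma bp321: assumes "N321 xs" "\<And>p. p < length xs \<Longrightarrow> xs!p < b" "b < (a::nat)" shows "N321 (xs@[a,b])"
proof (rule N321I)
  fix i j k assume H: "i<j" "j<k" "k<length (xs@[a,b])" "(xs@[a,b])!j < (xs@[a,b])!i" "(xs@[a,b])!k < (xs@[a,b])!j"
  show False
  proof (cases "k < length xs")
    case True then show ?thesis using H N321D[OF assms(1), of i j k] by (simp add: nth_append)
  next
    case False
    then show ?thesis using H assms(2)[of i] assms(2)[of j] assms(3) by (auto simp: nth2 split: if_splits)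
  qed
qed

lemma bp1423: assumes "N1423 xs" "\<And>p. p < length xs \<Longrightarrow> xs!p < b" "b < (a::nat)" shows "N1423 (xs@[a,b])"
proof (rule N1423I)
  fix i j k l assume H: "i<j" "j<k" "k<l" "l<length (xs@[a,b])" "(xs@[a,b])!i < (xs@[a,b])!k" "(xs@[a,b])!k < (xs@[a,b])!l" "(xs@[a,b])!l < (xs@[a,b])!j"
  show False
  proof (cases "l < length xs")
    case True then show ?thesis using H N1423D[OF assms(1), of i j k l] by (simp add: nth_append)
  next
    case False
    then show ?thesis using H assms(2)[of i] assms(2)[of j] assms(2)[of k] assms(3) by (auto simp: nth2 split: if_splits)
  qed
qed

lemma bp4123: assumes "N4123 xs" "\<And>p. p < length xs \<Longrightarrow> xs!p < b" "b < (a::nat)" shows "N4123 (xs@[a,b])"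
proof (rule N4123I)
  fix i j k l assume H: "i<j" "j<k" "k<l" "l<length (xs@[a,b])" "(xs@[a,b])!j < (xs@[a,b])!k" "(xs@[a,b])!k < (xs@[a,b])!l" "(xs@[a,b])!l < (xs@[a,b])!i"
  show False
  proof (cases "l < length xs")
    case True then show ?thesis using H N4123D[OF assms(1), of i j k l] by (simp add: nth_append)
  next
    case False
    then show ?thesis using H assms(2)[of i] assms(2)[of j] assms(2)[of k] assms(3) by (auto simp: nth2 split: if_splits)
  qed
qed

lemma bpfb: assumes "fishburn xs" "\<And>p. p < length xs \<Longrightarrow> xs!p < b" "b < (a::nat)" "a = b + 1" shows "fishburn (xs@[a,b])"
proof (rule FBI)
  fix i j assume H: "i<j" "j<length (xs@[a,b])" "i+1 < length (xs@[a,b])" "(xs@[a,b])!j < (xs@[a,b])!i" "(xs@[a,b])!i < (xs@[a,b])!(i+1)" "(xs@[a,b])!i = (xs@[a,b])!j + 1"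
  show False
  proof (cases "j < length xs")
    case True then show ?thesis using H FBD[OF assms(1), of i j] by (simp add: nth_append)
  next
    case False
    then show ?thesis using H assms(2)[of i] assms(2)[of "i+1"] assms(3,4) by (auto simp: nth2 split: if_splits)
  qed
qed
lemma permA: "is_perm (Suc n) (xs@[Suc n]) \<longleftrightarrow> is_perm n xs"
proof -
  have I: "{1..Suc n} = insert (Suc n) {1..n}" by (simp add: atLeastAtMostSuc_conv)
  show ?thesis
  proof
    assume A: "is_perm (Suc n) (xs@[Suc n])"
    then have "length xs = n" "distinct xs" "Suc n \<notin> set xs" "insert (Suc n) (set xs) = insert (Suc n) {1..n}"
      unfolding is_perm_def I by auto
    moreover have "Suc n \<notin> {1..n}" by simp
    ultimately have "set xs = {1..n}" by (metis insert_ident)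
    then show "is_perm n xs" using A unfolding is_perm_def by auto
  next
    assume "is_perm n xs" then show "is_perm (Suc n) (xs@[Suc n])" unfolding is_perm_def I by auto
  qed
qed

lemma permB: "is_perm (Suc (Suc n)) (xs@[Suc (Suc n), Suc n]) \<longleftrightarrow> is_perm n xs"
proof -
  have I: "{1..Suc (Suc n)} = insert (Suc (Suc n)) (insert (Suc n) {1..n})" by (simp add: atLeastAtMostSuc_conv)
  show ?thesis
  proof
    assume A: "is_perm (Suc (Suc n)) (xs@[Suc (Suc n), Suc n])"
    then have "length xs = n" "distinct xs" "Suc n \<notin> set xs" "Suc (Suc n) \<notin> set xs"
       "insert (Suc (Suc n)) (insert (Suc n) (set xs)) = insert (Suc (Suc n)) (insert (Suc n) {1..n})"
      unfolding is_perm_def I by auto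
    moreover have "Suc n \<notin> {1..n}" "Suc (Suc n) \<notin> {1..n}" by simp_all
    ultimately have "set xs = {1..n}" by (metis insert_ident insert_iff n_not_Suc_n)
    then show "is_perm n xs" using A unfolding is_perm_def by auto
  next
    assume "is_perm n xs" then show "is_perm (Suc (Suc n)) (xs@[Suc (Suc n), Suc n])" unfolding is_perm_def I by auto
  qed
qed
lemma memA: "xs \<in> fishburn_avoiders n PP \<longleftrightarrow> xs@[Suc n] \<in> fishburn_avoiders (Suc n) PP"
proof
  assume "xs \<in> fishburn_avoiders n PP"
  then have P: "is_perm n xs" "fishburn xs" "N321 xs" "N1423 xs" "N4123 xs" using memF by auto
  have b: "\<forall>x\<in>set xs. x < Suc n" using P(1) unfolding is_perm_def by auto
  have "is_perm (Suc n) (xs@[Suc n])" using permA P(1) by blast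
  then show "xs@[Suc n] \<in> fishburn_avoiders (Suc n) PP" unfolding memF
    using ap321[OF P(3) b] ap1423[OF P(4) b] ap4123[OF P(5) b] apfb[OF P(2) b] by simp
next
  assume "xs@[Suc n] \<in> fishburn_avoiders (Suc n) PP"
  then show "xs \<in> fishburn_avoiders n PP" unfolding memF using permA[of n xs] pre321[of xs] pre1423[of xs] pre4123[of xs] prefb[of xs] by blast
qed

lemma memB: "xs \<in> fishburn_avoiders n PP \<longleftrightarrow> xs@[Suc (Suc n), Suc n] \<in> fishburn_avoiders (Suc (Suc n)) PP"
proof
  assume "xs \<in> fishburn_avoiders n PP"
  then have P: "is_perm n xs" "fishburn xs" "N321 xs" "N1423 xs" "N4123 xs" using memF by auto
  have b: "\<And>p. p < length xs \<Longrightarrow> xs!p < Suc n" using perm_bound[OF P(1)] le_imp_less_Suc by blast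
  have "is_perm (Suc (Suc n)) (xs@[Suc (Suc n), Suc n])" using permB P(1) by blast
  then show "xs@[Suc (Suc n), Suc n] \<in> fishburn_avoiders (Suc (Suc n)) PP" unfolding memF
    using bp321[OF P(3) b] bp1423[OF P(4) b] bp4123[OF P(5) b] bpfb[OF P(2) b] by simp
next
  assume "xs@[Suc (Suc n), Suc n] \<in> fishburn_avoiders (Suc (Suc n)) PP"
  then show "xs \<in> fishburn_avoiders n PP" unfolding memF using permB[of n xs] pre321[of xs] pre1423[of xs] pre4123[of xs] prefb[of xs] by blast
qed



definition Bn :: "nat \<Rightarrow> nat list" where "Bn n = 3 # 1 # ([4..<Suc n] @ [2])"

lemma Bn_len: "3 \<le> n \<Longrightarrow> length (Bn n) = n"
  unfolding Bn_def by (simp; linarith)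

lemma Bn_nth: assumes "3 \<le> n" "i < n"
  shows "Bn n ! i = (if i = 0 then 3 else if i = 1 then 1 else if i = n - 1 then 2 else i + 2)"
proof (cases "i \<le> 1")
  case True
  then have "i = 0 \<or> i = 1" by linarith
  then show ?thesis using assms unfolding Bn_def by (elim disjE) simp_all
next
  case False
  define k where "k = i - 2"
  have k: "i = Suc (Suc k)" using False unfolding k_def by simp
  have L: "length [4..<Suc n] = n - 3" by (simp; linarith)
  have "Bn n ! i = ([4..<Suc n] @ [2]) ! k" unfolding Bn_def k by simp
  also have "\<dots> = (if k < n - 3 then 4 + k else 2)"
  proof (cases "k < n - 3")
    case True then show ?thesis by (simp add: nth_append L del: upt_Suc)
  next
    case False then have "k = n - 3" using assms k by linarith
    then show ?thesis by (simp add: nth_append L del: upt_Suc)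
  qed
  finally show ?thesis using assms k by auto
qed
lemma Bn_perm: "3 \<le> n \<Longrightarrow> is_perm n (Bn n)"
proof -
  assume n: "3 \<le> n"
  have "set (Bn n) = {1..n}" unfolding Bn_def using n by (auto simp del: upt_Suc)
  moreover have "distinct (Bn n)" unfolding Bn_def by (simp del: upt_Suc)
  ultimately show ?thesis using Bn_len n unfolding is_perm_def by auto
qed

lemma Bn_F: assumes n: "3 \<le> n" shows "Bn n \<in> fishburn_avoiders n PP"
proof -
  have A: "N321 (Bn n)"
  proof (rule N321I)
    fix i j k assume H: "i<j" "j<k" "k<length (Bn n)" "(Bn n)!j < (Bn n)!i" "(Bn n)!k < (Bn n)!j"
    have lt: "i < n" "j < n" "k < n" using H Bn_len[OF n] by auto
    show False using H(1,2,4,5) lt unfolding Bn_nth[OF n lt(1)] Bn_nth[OF n lt(2)] Bn_nth[OF n lt(3)]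
      by (simp split: if_splits)
  qed
  have B: "N1423 (Bn n)"
  proof (rule N1423I)
    fix i j k l assume H: "i<j" "j<k" "k<l" "l<length (Bn n)" "(Bn n)!i < (Bn n)!k" "(Bn n)!k < (Bn n)!l" "(Bn n)!l < (Bn n)!j"
    have lt: "i < n" "j < n" "k < n" "l < n" using H Bn_len[OF n] by auto
    show False using H(1,2,3,5,6,7) lt unfolding Bn_nth[OF n lt(1)] Bn_nth[OF n lt(2)] Bn_nth[OF n lt(3)] Bn_nth[OF n lt(4)]
      by (simp split: if_splits)
  qed
  have C: "N4123 (Bn n)"
  proof (rule N4123I)
    fix i j k l assume H: "i<j" "j<k" "k<l" "l<length (Bn n)" "(Bn n)!j < (Bn n)!k" "(Bn n)!k < (Bn n)!l" "(Bn n)!l < (Bn n)!i"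
    have lt: "i < n" "j < n" "k < n" "l < n" using H Bn_len[OF n] by auto
    show False using H(1,2,3,5,6,7) lt unfolding Bn_nth[OF n lt(1)] Bn_nth[OF n lt(2)] Bn_nth[OF n lt(3)] Bn_nth[OF n lt(4)]
      by (simp split: if_splits)
  qed
  have D: "fishburn (Bn n)"
  proof (rule FBI)
    fix i j assume H: "i<j" "j<length (Bn n)" "i+1 < length (Bn n)" "(Bn n)!j < (Bn n)!i" "(Bn n)!i < (Bn n)!(i+1)" "(Bn n)!i = (Bn n)!j + 1"
    have lt: "i < n" "j < n" "i+1 < n" using H Bn_len[OF n] by auto
    show False using H(1,4,5,6) lt unfolding Bn_nth[OF n lt(1)] Bn_nth[OF n lt(2)] Bn_nth[OF n lt(3)]
      by (simp split: if_splits)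
  qed
  show ?thesis unfolding memF using A B C D Bn_perm[OF n] by simp
qed



context
  fixes xs :: "nat list" and n :: nat
  assumes F: "xs \<in> fishburn_avoiders n PP"
begin

lemma P: "is_perm n xs" "fishburn xs" "N321 xs" "N1423 xs" "N4123 xs" using F memF by auto
lemma L: "length xs = n" using P(1) is_perm_def by auto
lemma bnd: "i < n \<Longrightarrow> 1 \<le> xs!i \<and> xs!i \<le> n" using perm_bound[OF P(1)] L by auto
lemma inj: "i < n \<Longrightarrow> j < n \<Longrightarrow> xs!i = xs!j \<Longrightarrow> i = j"
  using P(1) L nth_eq_iff_index_eq unfolding is_perm_def by blast
lemma pos: "1 \<le> v \<Longrightarrow> v \<le> n \<Longrightarrow> \<exists>i<n. xs!i = v"
proof -
  assume "1 \<le> v" "v \<le> n"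
  then have "v \<in> set xs" using P(1) unfolding is_perm_def by auto
  then show ?thesis using L by (auto simp: in_set_conv_nth)
qed
lemma ne: "i < n \<Longrightarrow> j < n \<Longrightarrow> i \<noteq> j \<Longrightarrow> xs!i \<noteq> xs!j" using inj by blast

lemma incr_after: assumes "p < n" "xs!p = n" "p<i" "i<j" "j<n" shows "xs!i < xs!j"
proof (rule ccontr)
  assume "\<not> xs!i < xs!j"
  then have "xs!j < xs!i" using ne[of i j] assms by force
  moreover have "xs!i < xs!p" using bnd[of i] ne[of i p] assms by force
  ultimately show False using N321D[OF P(3), of p i j] assms L by simp
qed

lemma len3_conv: "length (ys::nat list) = 3 \<Longrightarrow> ys = [ys!0, ys!1, ys!2]"
  by (cases ys; cases "tl ys"; cases "tl (tl ys)") (auto simp: numeral_3_eq_3)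

lemma case3: assumes n: "3 \<le> n" and p: "xs!(n-3) = n" and mn: "xs!(n-1) \<noteq> n" shows "xs = Bn n"
proof -
  have ar: "n-3 < n-2" "n-2 < n-1" "n-1 < n" "n - 3 < n" "n - 2 < n" using n by auto
  define s where "s = xs!(n-2)"
  define m where "m = xs!(n-1)"
  have sm: "s < m" unfolding s_def m_def using incr_after[of "n-3" "n-2" "n-1"] n p by simp
  have mn': "m < n" using bnd[of "n-1"] mn n unfolding m_def by force
  have s1: "s = 1"
  proof (rule ccontr)
    assume "s \<noteq> 1"
    then have "1 < s" using bnd[of "n-2"] n unfolding s_def by force
    obtain u where u: "u < n" "xs!u = 1" using pos[of 1] n by auto
    have "u \<noteq> n-2" using u \<open>1<s\<close> s_def by auto
    moreover have "u \<noteq> n-1" using u \<open>1<s\<close> sm m_def by auto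
    moreover have "u \<noteq> n-3" using u p n by auto
    ultimately have "u < n-3" using u by auto
    then show False using N1423D[OF P(4), of u "n-3" "n-2" "n-1"] ar u L p \<open>1<s\<close> sm mn' s_def m_def by simp
  qed
  have m1: "m = n - 1"
  proof (rule ccontr)
    assume "m \<noteq> n - 1"
    then have mlt: "m + 1 < n" using mn' by auto
    have m0: "1 \<le> m" using bnd[of "n-1"] n unfolding m_def by simp
    obtain q where q: "q < n" "xs!q = m+1" using pos[of "m+1"] mlt by auto
    have "q \<noteq> n-3" using q p mlt by auto
    moreover have "q \<noteq> n-2" using q s1 s_def m0 by auto
    moreover have "q \<noteq> n-1" using q m_def by auto
    ultimately have qp: "q < n-3" using q by auto
    have "q + 1 \<noteq> n - 3"
    proof
      assume "q + 1 = n - 3"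
      moreover have "q < n - 1" using qp by auto
      ultimately show False using FBD[OF P(2), of q "n-1"] ar L q mlt m_def p by simp
    qed
    then have qp1: "q+1 < n-3" using qp by auto
    define t where "t = xs!(q+1)"
    have "t \<noteq> m+1" using ne[of "q+1" q] q qp1 n t_def by auto
    moreover have "\<not> t > m+1" 
    proof
      assume "t > m+1"
      moreover have "q < n - 1" "q+1 < n" using qp1 by auto
      ultimately show False using FBD[OF P(2), of q "n-1"] ar L q m_def t_def by simp
    qed
    ultimately have tm: "t < m+1" by auto
    have "t \<noteq> 1" using ne[of "q+1" "n-2"] qp1 n s1 s_def t_def by auto
    then have "1 < t" using bnd[of "q+1"] qp1 n t_def by force
    moreover have "q+1 < n-2" using qp1 by auto
    ultimately show False using N321D[OF P(3), of q "q+1" "n-2"] ar L q tm t_def s1 s_def by simp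
  qed
  have n3: "n = 3"
  proof (rule ccontr)
    assume "n \<noteq> 3"
    then have n4: "4 \<le> n" using n by auto
    obtain u where u: "u < n" "xs!u = 2" using pos[of 2] n by auto
    have "u \<noteq> n-2" using u s1 s_def by auto
    moreover have "u \<noteq> n-1" using u m1 m_def n4 by auto
    moreover have "u \<noteq> n-3" using u p n4 by auto
    ultimately have up: "u < n-3" using u by auto
    have "2 < xs!(u+1)"
    proof (cases "u+1 = n-3")
      case True then show ?thesis using p n4 by simp
    next
      case False
      then have "u+1 < n-3" using up by auto
      then have "xs!(u+1) \<noteq> 1" "xs!(u+1) \<noteq> 2" "1 \<le> xs!(u+1)"
        using ne[of "u+1" "n-2"] ne[of "u+1" u] bnd[of "u+1"] s1 s_def u n4 by auto
      then show ?thesis by auto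
    qed
    moreover have "u < n-2" using up by auto
    ultimately show False using FBD[OF P(2), of u "n-2"] ar L u s1 s_def by simp
  qed
  have "xs = [xs!0, xs!1, xs!2]" using len3_conv L n3 by simp
  also have "\<dots> = [3,1,2]" using p s1 m1 n3 s_def m_def by simp
  also have "\<dots> = Bn n" using n3 by (simp add: Bn_def)
  finally show ?thesis .
qed

lemma case2: assumes n: "2 \<le> n" and p: "xs!(n-2) = n" and mn: "xs!(n-1) \<noteq> n-1" shows "3 \<le> n \<and> xs = Bn n"
proof -
  define m where "m = xs!(n-1)"
  have ar0: "n-2 < n-1" "n-1 < n" "n-2 < n" using n by auto
  have "m \<noteq> n" using ne[of "n-1" "n-2"] ar0 p m_def by auto
  then have mlt: "m + 1 < n" using bnd[of "n-1"] mn ar0 unfolding m_def by force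
  have m0: "1 \<le> m" using bnd[of "n-1"] ar0 unfolding m_def by simp
  have n3: "3 \<le> n" using mlt m0 by auto
  obtain q where q: "q < n" "xs!q = m+1" using pos[of "m+1"] mlt by auto
  have "q \<noteq> n-2" using q p mlt by auto
  moreover have "q \<noteq> n-1" using q m_def by auto
  ultimately have qp: "q < n-2" using q by auto
  have "q + 1 \<noteq> n - 2"
  proof
    assume "q + 1 = n - 2"
    moreover have "q < n - 1" using qp by auto
    ultimately show False using FBD[OF P(2), of q "n-1"] ar0 L q mlt m_def p by simp
  qed
  then have qp1: "q+1 < n-2" using qp by auto
  define t where "t = xs!(q+1)"
  have "t \<noteq> m+1" using ne[of "q+1" q] q qp1 t_def by auto
  moreover have "\<not> t > m+1" 
  proof
    assume "t > m+1"
    moreover have "q < n - 1" "q+1 < n" using qp1 by auto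
    ultimately show False using FBD[OF P(2), of q "n-1"] ar0 L q m_def t_def by simp
  qed
  ultimately have "t < m+1" by auto
  moreover have "t \<noteq> m" using ne[of "q+1" "n-1"] qp1 ar0 m_def t_def by auto
  ultimately have tm: "t < m" by auto
  have t0: "1 \<le> t" using bnd[of "q+1"] qp1 t_def by auto
  have Mid: "m+1 < xs!r" if r: "q+1 < r" "r < n-2" for r
  proof -
    have rn: "r < n" "r < n - 1" using r by auto
    have "xs!r \<noteq> m+1" "xs!r \<noteq> m" "xs!r \<noteq> t"
      using ne[of r q] ne[of r "n-1"] ne[of r "q+1"] r rn q qp1 m_def t_def by auto
    moreover have "\<not> xs!r < m"
    proof
      assume wm: "xs!r < m"
      show False
      proof (cases "t < xs!r")
        case True
        then show False using N4123D[OF P(5), of q "q+1" r "n-1"] r rn L q wm t_def m_def by simp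
      next
        case False
        then have "xs!r < t" using \<open>xs!r \<noteq> t\<close> by auto
        then show False using N321D[OF P(3), of q "q+1" r] r rn L q tm t_def by simp
      qed
    qed
    ultimately show ?thesis by auto
  qed
  have Early: "t < xs!r \<and> xs!r < m" if r: "r < q" for r
  proof -
    have rn: "r < n" using r q by auto
    have ne3: "xs!r \<noteq> m+1" "xs!r \<noteq> m" "xs!r \<noteq> t"
      using ne[of r q] ne[of r "n-1"] ne[of r "q+1"] r rn q qp1 m_def t_def by auto
    have "\<not> xs!r > m+1"
    proof
      assume "xs!r > m+1"
      moreover have "q < n-1" using qp by auto
      ultimately show False using N321D[OF P(3), of r q "n-1"] r ar0 L q m_def by simp
    qed
    then have wm: "xs!r < m" using ne3 by auto
    have "\<not> xs!r < t"
    proof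
      assume "xs!r < t"
      moreover have "q+1 < n-1" using qp1 by auto
      ultimately show False using N1423D[OF P(4), of r q "q+1" "n-1"] r ar0 L q tm m_def t_def by simp
    qed
    then show ?thesis using wm ne3 by auto
  qed
  have t1: "t = 1"
  proof (rule ccontr)
    assume "t \<noteq> 1"
    obtain u where u: "u < n" "xs!u = 1" using pos[of 1] n by auto
    have "u \<noteq> q+1" using u t_def \<open>t\<noteq>1\<close> by auto
    moreover have "u \<noteq> n-1" using u tm t0 m_def by auto
    moreover have "u \<noteq> n-2" using u p n by auto
    moreover have "u \<noteq> q" using u q m0 by auto
    moreover have "\<not> u < q" using Early[of u] u t0 by auto
    moreover have "\<not> (q+1 < u \<and> u < n-2)" using Mid[of u] u by auto
    ultimately show False using u by auto
  qed
  have m2: "m = 2"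
  proof (rule ccontr)
    assume "m \<noteq> 2"
    then have m3: "3 \<le> m" using tm t1 by auto
    obtain u where u: "u < n" "xs!u = 2" using pos[of 2] n by auto
    have "u \<noteq> q+1"
    proof
      assume "u = q+1" then have "xs!u = t" using t_def by simp
      then show False using u t1 by simp
    qed
    moreover have "u \<noteq> n-1" using u m3 m_def by auto
    moreover have "u \<noteq> n-2" using u p mlt m3 by auto
    moreover have "u \<noteq> q" using u q m3 by auto
    moreover have "\<not> (q+1 < u \<and> u < n-2)" using Mid[of u] u m3 by auto
    ultimately have uq: "u < q" using u by auto
    have "2 < xs!(u+1)"
    proof (cases "u+1 = q")
      case True then show ?thesis using q m3 by simp
    next
      case False
      then have "u+1 < q" using uq by auto
      then have "t < xs!(u+1)" "xs!(u+1) \<noteq> 2" using Early[of "u+1"] ne[of "u+1" u] u q by auto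
      then show ?thesis using t1 by auto
    qed
    moreover have "u < q+1" "q+1 < n" "u+1 < n" using uq qp1 by auto
    ultimately show False using FBD[OF P(2), of u "q+1"] L u t1 t_def by simp
  qed
  have q0: "q = 0"
  proof (rule ccontr)
    assume "q \<noteq> 0"
    then show False using Early[of 0] t1 m2 by auto
  qed
  have n4: "4 \<le> n" using qp1 q0 by auto
  have x0: "xs!0 = 3" using q q0 m2 by simp
  have x1: "xs!1 = 1" using t_def t1 q0 by simp
  have xl: "xs!(n-1) = 2" using m_def m2 by simp
  have big: "3 < xs!r" if "1 < r" "r \<le> n-2" for r
  proof (cases "r = n-2")
    case True then show ?thesis using p n4 by simp
  next
    case False then show ?thesis using Mid[of r] that q0 m2 by simp
  qed
  have incr: "xs!r < xs!r'" if "1 < r" "r < r'" "r' \<le> n-2" for r r'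
  proof (rule ccontr)
    assume "\<not> xs!r < xs!r'"
    moreover have "xs!r \<noteq> xs!r'" using ne[of r r'] that n4 by auto
    ultimately have "xs!r' < xs!r" by auto
    moreover have "2 < xs!r'" using big[of r'] that by auto
    moreover have "r' < n-1" using that n4 by auto
    ultimately show False using N321D[OF P(3), of r r' "n-1"] that ar0 L xl by simp
  qed
  define M where "M = take (n-3) (drop 2 xs)"
  have lM: "length M = n-3" unfolding M_def using L n4 by simp
  have nM: "M!k = xs!(k+2)" if "k < n-3" for k unfolding M_def using that L n4 by simp
  have sM: "sorted_wrt (<) M" unfolding sorted_wrt_iff_nth_less lM
    using nM incr by auto
  have setM: "set M = {4..n}"
  proof
    show "set M \<subseteq> {4..n}"
    proof
      fix x assume "x \<in> set M"
      then obtain k where k: "k < n-3" "x = M!k" using lM by (auto simp: in_set_conv_nth)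
      then have "x = xs!(k+2)" using nM by simp
      moreover have "3 < xs!(k+2)" "xs!(k+2) \<le> n" using big[of "k+2"] bnd[of "k+2"] k by auto
      ultimately show "x \<in> {4..n}" by auto
    qed
  next
    show "{4..n} \<subseteq> set M"
    proof
      fix v assume v: "v \<in> {4..n}"
      then obtain u where u: "u < n" "xs!u = v" using pos[of v] by auto
      have "u \<noteq> 0" proof assume "u=0" then have "v = 3" using u x0 by simp then show False using v by simp qed
      moreover have "u \<noteq> 1" proof assume "u=1" then have "v = 1" using u x1 by simp then show False using v by simp qed
      moreover have "u \<noteq> n-1" proof assume "u=n-1" then have "v = 2" using u xl by simp then show False using v by simp qed
      ultimately have "2 \<le> u" "u - 2 < n - 3" using u by auto
      moreover have "u - 2 + 2 = u" using calculation by simp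
      ultimately have "M!(u-2) = v" using nM[of "u-2"] u by metis
      then show "v \<in> set M" using \<open>u - 2 < n - 3\<close> lM by (metis nth_mem)
    qed
  qed
  have Meq: "M = [4..<Suc n]"
    using sorted_distinct_set_unique[of M "[4..<Suc n]"] sM setM unfolding strict_sorted_iff
    by (simp add: atLeastLessThanSuc_atLeastAtMost del: upt_Suc)
  have "xs = Bn n"
  proof (rule nth_equalityI)
    show "length xs = length (Bn n)" using L Bn_len n3 by simp
  next
    fix i assume i: "i < length xs"
    then have i': "i < n" using L by simp
    show "xs!i = Bn n!i"
    proof (cases "i = 0 \<or> i = 1 \<or> i = n-1")
      case True then show ?thesis using Bn_nth[OF n3 i'] x0 x1 xl n4 by auto
    next
      case False
      then have "2 \<le> i" "i - 2 < n - 3" using i' by auto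
      moreover have "i - 2 + 2 = i" using calculation by simp
      ultimately have "xs!i = M!(i-2)" using nM[of "i-2"] by metis
      also have "\<dots> = i + 2" unfolding Meq using \<open>i - 2 < n - 3\<close> \<open>2 \<le> i\<close> by (simp del: upt_Suc)
      finally show ?thesis using Bn_nth[OF n3 i'] False by simp
    qed
  qed
  then show ?thesis using n3 by simp
qed

lemma classify: assumes n: "2 \<le> n"
  shows "(\<exists>ys. xs = ys@[n]) \<or> (\<exists>ys. xs = ys@[n, n-1]) \<or> (3 \<le> n \<and> xs = Bn n)"
proof (cases "xs!(n-1) = n")
  case True
  have "xs \<noteq> []" using L n by auto
  then have "xs = butlast xs @ [last xs]" by simp
  moreover have "last xs = n" using True L \<open>xs \<noteq> []\<close> by (simp add: last_conv_nth)
  ultimately show ?thesis by metis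
next
  case False
  obtain p where p: "p < n" "xs!p = n" using pos[of n] n by auto
  have pn1: "p \<noteq> n-1" using p False by auto
  have pge: "n - 3 \<le> p"
  proof (rule ccontr)
    assume "\<not> n - 3 \<le> p"
    then have h: "p+3 < n" by auto
    have a: "xs!(p+1) < xs!(p+2)" "xs!(p+2) < xs!(p+3)" using incr_after[OF p] h by auto
    have "xs!(p+3) < n" using bnd[of "p+3"] ne[of "p+3" p] h p by force
    then show False using N4123D[OF P(5), of p "p+1" "p+2" "p+3"] a h L p by simp
  qed
  show ?thesis
  proof (cases "p = n-2")
    case True
    show ?thesis
    proof (cases "xs!(n-1) = n-1")
      case True2: True
      have d1: "drop (n-2) xs = xs!(n-2) # drop (Suc (n-2)) xs" using Cons_nth_drop_Suc[of "n-2" xs] L n by simp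
      have d2: "drop (Suc (n-2)) xs = xs!(n-1) # drop n xs" using Cons_nth_drop_Suc[of "n-1" xs] L n
        by (simp add: Suc_diff_Suc numeral_2_eq_2)
      have "xs = take (n-2) xs @ drop (n-2) xs" by simp
      also have "\<dots> = take (n-2) xs @ [n, n-1]" using d1 d2 True True2 p L by simp
      finally show ?thesis by blast
    next
      case False2: False
      show ?thesis using case2[OF n _ False2] True p by simp
    qed
  next
    case False3: False
    then have "p = n - 3" "3 \<le> n" using pge p pn1 by auto
    then show ?thesis using case3[of ] p False by simp
  qed
qed

end

abbreviation "FF n \<equiv> fishburn_avoiders n PP"

lemma finF: "finite (FF n)"
proof -
  have "FF n \<subseteq> {xs. set xs \<subseteq> {1..n} \<and> length xs = n}" unfolding fishburn_avoiders_def is_perm_def by auto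
  moreover have "finite {xs. set xs \<subseteq> {1..(n::nat)} \<and> length xs = n}" by (rule finite_lists_length_eq) simp
  ultimately show ?thesis by (rule finite_subset)
qed

lemma decomp: assumes n: "2 \<le> n"
  shows "FF n = (\<lambda>ys. ys@[n]) ` FF (n-1) \<union> (\<lambda>ys. ys@[n,n-1]) ` FF (n-2) \<union> (if 3 \<le> n then {Bn n} else {})"
proof -
  obtain k where k: "n = Suc (Suc k)" using n by (metis add_2_eq_Suc le_Suc_ex)
  have e1: "n - 1 = Suc k" "n - 2 = k" using k by auto
  show ?thesis
  proof
    show "FF n \<subseteq> (\<lambda>ys. ys@[n]) ` FF (n-1) \<union> (\<lambda>ys. ys@[n,n-1]) ` FF (n-2) \<union> (if 3 \<le> n then {Bn n} else {})"
    proof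
      fix xs assume xs: "xs \<in> FF n"
      from classify[OF xs n] consider (A) ys where "xs = ys@[n]" | (B) ys where "xs = ys@[n,n-1]" | (C) "3 \<le> n" "xs = Bn n" by blast
      then show "xs \<in> (\<lambda>ys. ys@[n]) ` FF (n-1) \<union> (\<lambda>ys. ys@[n,n-1]) ` FF (n-2) \<union> (if 3 \<le> n then {Bn n} else {})"
      proof cases
        case (A ys)
        then have "ys \<in> FF (n-1)" using memA[of ys "Suc k"] xs k e1 by simp
        then show ?thesis using A by blast
      next
        case (B ys)
        then have "ys \<in> FF (n-2)" using memB[of ys k] xs k e1 by simp
        then show ?thesis using B by blast
      next
        case C then show ?thesis by simp
      qed
    qed
  next
    have "(\<lambda>ys. ys@[n]) ` FF (n-1) \<subseteq> FF n" using memA[of _ "Suc k"] k e1 by auto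
    moreover have "(\<lambda>ys. ys@[n,n-1]) ` FF (n-2) \<subseteq> FF n" using memB[of _ k] k e1 by auto
    moreover have "(if 3 \<le> n then {Bn n} else {}) \<subseteq> FF n" using Bn_F by auto
    ultimately show "(\<lambda>ys. ys@[n]) ` FF (n-1) \<union> (\<lambda>ys. ys@[n,n-1]) ` FF (n-2) \<union> (if 3 \<le> n then {Bn n} else {}) \<subseteq> FF n"
      by blast
  qed
qed

lemma last_Bn: "last (Bn n) = 2" unfolding Bn_def by simp

lemma card_rec: assumes n: "2 \<le> n"
  shows "card (FF n) = card (FF (n-1)) + card (FF (n-2)) + (if 3 \<le> n then 1 else 0)"
proof -
  let ?A = "(\<lambda>ys. ys@[n]) ` FF (n-1)" and ?B = "(\<lambda>ys. ys@[n,n-1]) ` FF (n-2)"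
    and ?C = "(if 3 \<le> n then {Bn n} else {})"
  have cA: "card ?A = card (FF (n-1))" by (rule card_image) (simp add: inj_on_def)
  have cB: "card ?B = card (FF (n-2))" by (rule card_image) (simp add: inj_on_def)
  have cC: "card ?C = (if 3 \<le> n then 1 else 0)" by simp
  have dAB: "?A \<inter> ?B = {}"
  proof -
    have "ys@[n] \<noteq> zs@[n,n-1]" for ys zs
    proof
      assume "ys@[n] = zs@[n,n-1]"
      then have "last (ys@[n]) = last (zs@[n,n-1])" by simp
      then show False using n by simp
    qed
    then show ?thesis by blast
  qed
  have dC: "(?A \<union> ?B) \<inter> ?C = {}"
  proof (cases "3 \<le> n")
    case True
    have "Bn n \<noteq> ys@[n]" for ys
    proof
      assume "Bn n = ys@[n]"
      then have "last (Bn n) = n" by simp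
      then show False using last_Bn True by simp
    qed
    moreover have "Bn n \<noteq> ys@[n,n-1]" for ys
    proof
      assume h: "Bn n = ys@[n,n-1]"
      then have "last (Bn n) = n - 1" by simp
      then have n3: "n = 3" using last_Bn True by simp
      then have "[3,1,2] = ys@[3,2]" using h by (simp add: Bn_def)
      then show False by (cases ys) auto
    qed
    ultimately show ?thesis by auto
  next
    case False then show ?thesis by simp
  qed
  have fA: "finite ?A" "finite ?B" "finite ?C" using finF by auto
  have "card (FF n) = card (?A \<union> ?B \<union> ?C)" using decomp[OF n] by simp
  also have "\<dots> = card (?A \<union> ?B) + card ?C" using card_Un_disjoint[OF _ fA(3) dC] fA by simp
  also have "card (?A \<union> ?B) = card ?A + card ?B" using card_Un_disjoint[OF fA(1,2) dAB] .
  finally show ?thesis using cA cB cC by simp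
qed

lemma F0: "FF 0 = {[]}"
proof -
  have "xs \<in> FF 0 \<Longrightarrow> xs = []" for xs unfolding memF is_perm_def by auto
  moreover have "[] \<in> FF 0" unfolding memF is_perm_def N321_def N1423_def N4123_def fishburn_def by simp
  ultimately show ?thesis by blast
qed

lemma F1: "FF 1 = {[1]}"
proof -
  have "xs \<in> FF 1 \<Longrightarrow> xs = [1]" for xs
  proof -
    assume "xs \<in> FF 1"
    then have "length xs = 1" "set xs = {1}" unfolding memF is_perm_def by auto
    then show "xs = [1]" by (cases xs) auto
  qed
  moreover have "[1] \<in> FF 1" using memA[of "[]" 0] F0 by simp
  ultimately show ?thesis by blast
qed

lemma fib1_pos: "1 \<le> fib1 n"
  by (induction n rule: fib1.induct) auto

lemma main_aux: "card (FF (Suc n)) = fib1 (Suc (Suc n)) - 1"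
proof (induction n rule: nat_less_induct)
  case (1 n)
  show ?case
  proof (cases n)
    case 0 then show ?thesis using F1 by simp
  next
    case (Suc k)
    show ?thesis
    proof (cases k)
      case 0
      then have "card (FF (Suc n)) = card (FF 1) + card (FF 0)" using card_rec[of 2] Suc by (simp add: numeral_2_eq_2)
      then show ?thesis using F0 F1 Suc 0 by (simp add: numeral_eq_Suc)
    next
      case (Suc j)
      have r: "card (FF (Suc n)) = card (FF n) + card (FF k) + 1" using card_rec[of "Suc n"] \<open>n = Suc k\<close> Suc by simp
      have h1: "card (FF n) = fib1 (Suc n) - 1" using 1[rule_format, of k] \<open>n = Suc k\<close> by simp
      have h2: "card (FF k) = fib1 (Suc k) - 1" using 1[rule_format, of j] \<open>n = Suc k\<close> Suc by simp
      have "fib1 (Suc (Suc n)) = fib1 (Suc n) + fib1 n" by simp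
      then show ?thesis using r h1 h2 fib1_pos[of "Suc n"] fib1_pos[of n] \<open>n = Suc k\<close> by simp
    qed
  qed
qed

theorem mainTheorem14:
  fixes n :: nat
  assumes "n \<ge> 1"
  shows "card (fishburn_avoiders n [[3,2,1], [1,4,2,3], [4,1,2,3]]) = fib1 (n + 1) - 1"
proof -
  obtain k where k: "n = Suc k" using assms by (metis Suc_le_D One_nat_def)
  show ?thesis using main_aux[of k] k by simp
qed


end
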